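(* Suppose $x\in\mathrm{Fix}_n(\sigma)^\circ$ for some integer $n\ge1$, and that $n$ is minimal with this property. If $f\in C(X)$, $m\in\mathbb{Z}$, $\mathrm{supp}(f)\subset\mathrm{Fix}_m(\sigma)$ and $n\nmid m$, then $f(x)=0$.
   Context: $X$ is a non-empty compact Hausdorff space, $\sigma:X\to X$ a homeomorphism, $C(X)$ the continuous complex functions on $X$. For $m\in\mathbb{Z}$, $\mathrm{Fix}_m(\sigma)=\{x\in X:\sigma^mx=x\}$; superscript $\circ$ denotes interior in $X$; $\mathrm{supp}(f)$ is the closure of $\{x:f(x)\ne0\}$. *)

theory Defs
  imports "HOL-Analysis.Analysis"
begin

definition zpow :: "'a set \<Rightarrow> ('a \<Rightarrow> 'a) \<Rightarrow> int \<Rightarrow> 'a \<Rightarrow> 'a" where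
  "zpow X \<sigma> m = (if 0 \<le> m then \<sigma> ^^ nat m else inv_into X \<sigma> ^^ nat (- m))"

definition Fix :: "'a set \<Rightarrow> ('a \<Rightarrow> 'a) \<Rightarrow> int \<Rightarrow> 'a set" where
  "Fix X \<sigma> m = {x \<in> X. zpow X \<sigma> m x = x}"

definition supp :: "'a::topological_space set \<Rightarrow> ('a \<Rightarrow> complex) \<Rightarrow> 'a set" where
  "supp X f = (top_of_set X) closure_of {x \<in> X. f x \<noteq> 0}"

end

theory Submission
  imports Defs
begin

lemma funpow_period_mult: "(f ^^ n) y = y \<Longrightarrow> (f ^^ (n * k)) y = y"
proof (induction k)
  case 0 then show ?case by simp
next
  case (Suc k)
  have "(f ^^ (n * Suc k)) y = (f ^^ n) ((f ^^ (n*k)) y)"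
    by (simp add: funpow_add mult.commute)
  with Suc show ?case by simp
qed

lemma funpow_period_gcd:
  assumes "n \<noteq> 0" "(f ^^ n) y = y" "(f ^^ a) y = y"
  shows "(f ^^ gcd n a) y = y"
proof -
  obtain u v where uv: "n * u = a * v + gcd n a" using bezout_nat[OF assms(1)] by blast
  have "y = (f ^^ (n * u)) y" using funpow_period_mult[OF assms(2)] by simp
  also have "\<dots> = (f ^^ gcd n a) ((f ^^ (a * v)) y)" by (simp add: uv funpow_add[symmetric] add.commute)
    (simp add: funpow_add)
  also have "\<dots> = (f ^^ gcd n a) y" using funpow_period_mult[OF assms(3)] by simp
  finally show ?thesis by simp
qed

lemma inv_iter_back:
  assumes h: "homeomorphism X X \<sigma> \<tau>" and y: "y \<in> X"
  shows "(inv_into X \<sigma> ^^ k) y \<in> X \<and> (\<sigma> ^^ k) ((inv_into X \<sigma> ^^ k) y) = y"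
  using y
proof (induction k arbitrary: y)
  case 0 then show ?case by simp
next
  case (Suc k)
  have im: "\<sigma> ` X = X" using h by (simp add: homeomorphism_def)
  have z: "inv_into X \<sigma> y \<in> X" using Suc.prems im by (metis inv_into_into)
  have s: "\<sigma> (inv_into X \<sigma> y) = y" using Suc.prems im by (simp add: f_inv_into_f)
  have "(inv_into X \<sigma> ^^ Suc k) y = (inv_into X \<sigma> ^^ k) (inv_into X \<sigma> y)"
    by (simp add: funpow_Suc_right del: funpow.simps)
  moreover have "(\<sigma> ^^ Suc k) w = (\<sigma> ^^ k) (\<sigma> w)" for w
    by (simp add: funpow_Suc_right del: funpow.simps)
  ultimately show ?case using Suc.IH[OF z] s
    by (metis (no_types) Suc.IH funpow_swap1 z)
qed

lemma zpow_fix_nat: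
  assumes h: "homeomorphism X X \<sigma> \<tau>" and y: "y \<in> X" and e: "zpow X \<sigma> m y = y"
  shows "(\<sigma> ^^ nat \<bar>m\<bar>) y = y"
proof (cases "0 \<le> m")
  case True then show ?thesis using e by (simp add: zpow_def)
next
  case False
  then have "(inv_into X \<sigma> ^^ nat (-m)) y = y" using e by (simp add: zpow_def)
  with inv_iter_back[OF h y, of "nat (-m)"] False show ?thesis by simp
qed

theorem lemma2p1:
  fixes X :: "'a::t2_space set" and \<sigma> \<tau> :: "'a \<Rightarrow> 'a"
    and f :: "'a \<Rightarrow> complex" and x :: 'a and n :: nat and m :: int
  assumes "compact X" and "X \<noteq> {}"
    and "homeomorphism X X \<sigma> \<tau>"
    and "n \<ge> 1"
    and "x \<in> (top_of_set X) interior_of Fix X \<sigma> (int n)"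
    and "\<And>k::nat. 1 \<le> k \<Longrightarrow> k < n \<Longrightarrow> x \<notin> (top_of_set X) interior_of Fix X \<sigma> (int k)"
    and "continuous_on X f"
    and "supp X f \<subseteq> Fix X \<sigma> m"
    and "\<not> (int n dvd m)"
  shows "f x = 0"
proof (rule ccontr)
  assume fx: "f x \<noteq> 0"
  define a where "a = nat \<bar>m\<bar>"
  define g where "g = gcd n a"
  have gpos: "1 \<le> g" using assms(4) by (simp add: g_def Suc_le_eq)
  have gle: "g \<le> n" using assms(4) by (simp add: g_def gcd_le1_nat)
  have gne: "g \<noteq> n"
  proof
    assume "g = n"
    then have "n dvd a" by (metis g_def gcd_dvd2)
    then have "int n dvd m" unfolding a_def
      by (metis dvd_abs_iff int_nat_eq abs_ge_zero int_dvd_int_iff)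
    with assms(9) show False by simp
  qed
  define T where "T = (top_of_set X) interior_of Fix X \<sigma> (int n)"
  have T: "openin (top_of_set X) T" "x \<in> T" "T \<subseteq> Fix X \<sigma> (int n)"
    using assms(5) interior_of_subset[of "top_of_set X" "Fix X \<sigma> (int n)"] unfolding T_def by auto
  define V where "V = X \<inter> f -` (- {0})"
  have V: "openin (top_of_set X) V" unfolding V_def
    by (rule continuous_openin_preimage_gen[OF assms(7)]) auto
  have xX: "x \<in> X" using T unfolding Fix_def by auto
  have sub: "T \<inter> V \<subseteq> Fix X \<sigma> (int g)"
  proof
    fix y assume y: "y \<in> T \<inter> V"
    have yX: "y \<in> X" using y V_def by auto
    have "y \<in> {x \<in> X. f x \<noteq> 0}" using y V_def by auto
    then have "y \<in> supp X f" unfolding supp_def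
      using closure_of_subset[of "{x \<in> X. f x \<noteq> 0}" "top_of_set X"] by auto
    then have "zpow X \<sigma> m y = y" using assms(8) by (auto simp: Fix_def)
    then have pa: "(\<sigma> ^^ a) y = y" using zpow_fix_nat[OF assms(3) yX] a_def by simp
    have pn: "(\<sigma> ^^ n) y = y" using y T(3) by (auto simp: Fix_def zpow_def)
    have "(\<sigma> ^^ g) y = y" unfolding g_def
      by (rule funpow_period_gcd) (use assms(4) pn pa in auto)
    then show "y \<in> Fix X \<sigma> (int g)" using yX by (simp add: Fix_def zpow_def)
  qed
  have "x \<in> (top_of_set X) interior_of Fix X \<sigma> (int g)"
    using interior_of_maximal[OF sub openin_Int[OF T(1) V]] T(2) xX fx V_def by auto
  with assms(6)[of g] gpos gle gne show False by simp
qed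

end
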